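(* Consider Algorithm MWHVC (described in the context) run on a hypergraph $G=(V,E)$ of rank $f$ and maximum degree $\Delta$ with nonnegative vertex weights $w$, with parameters $\varepsilon\in(0,1]$, $\beta=\varepsilon/(f+\varepsilon)$ and multiplier $\alpha>1$. For every hyperedge $e$, the number of $e$-raise iterations is at most $\log_\alpha\Delta$.
   Context: Let $G=(V,E)$ be a hypergraph: each hyperedge is a nonempty subset of $V$ of size at most $f$ (rank $f$). Vertices have nonnegative weights $w(v)$. For $v\in V$, $E(v)=\{e\in E: v\in e\}$; $\Delta=\max_v |E(v)|\ge 3$. A hyperedge $e$ is covered by $C\subseteq V$ if $e\cap C\neq\emptyset$. The computation is distributed in synchronous rounds on the bipartite network with node set $V\cup E$ and a link between $v$ and $e$ iff $v\in e$. Parameters: $\varepsilon\in(0,1]$, $\beta=\varepsilon/(f+\varepsilon)$, and a multiplier $\alpha>1$. Algorithm MWHVC: Initialize $C\gets\emptyset$ and $E'(v)\gets E(v)$ for every $v$. Iteration $0$: every hyperedge $e$ sets $\mathrm{deal}_0(e)=\beta\cdot\min_{v\in e} w(v)/|E(v)|$ and $\delta_0(e)=\mathrm{deal}_0(e)$. For $i=1,2,\dots$: (a) every vertex $v\notin C$ (not terminated) checks whether $\sum_{e\in E(v)}\delta_{i-1}(e)\ge(1-\beta)w(v)$; if so, $v$ joins $C$, tells every $e\in E'(v)$ that $e$ is covered, and terminates. (b) Every uncovered hyperedge that receives such a message becomes covered, informs all its vertices, and terminates. (c) Every vertex $v\notin C$ that is told $e$ is covered sets $E'(v)\gets E'(v)\setminus\{e\}$;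 if $E'(v)=\emptyset$, $v$ terminates without joining $C$. (d) Every vertex $v\notin C$ sends "raise" to all $e\in E'(v)$ if $\sum_{e\in E'(v)}\mathrm{deal}_{i-1}(e)\le(\beta/\alpha)w(v)$, and otherwise sends "stuck" to all $e\in E'(v)$. (e) Every uncovered hyperedge $e$ sets $\mathrm{deal}_i(e)=\mathrm{deal}_{i-1}(e)$ if it received some "stuck" message, and $\mathrm{deal}_i(e)=\alpha\cdot\mathrm{deal}_{i-1}(e)$ otherwise, and $\delta_i(e)=\delta_{i-1}(e)+\mathrm{deal}_i(e)$. An iteration $i\ge 1$ is an $e$-raise iteration if $\mathrm{deal}_i(e)=\alpha\cdot\mathrm{deal}_{i-1}(e)$. *)

theory Defs
  imports Complex_Main
begin

text \<open>Hypergraph: vertex set V, hyperedges E :: 'v set set (each a nonempty subset of V).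
  The whole state of Algorithm MWHVC after iteration i is modelled centrally.\<close>

definition Einc :: "'v set set \<Rightarrow> 'v \<Rightarrow> 'v set set" where
  "Einc E v = {e \<in> E. v \<in> e}"

definition maxdeg :: "'v set \<Rightarrow> 'v set set \<Rightarrow> nat" where
  "maxdeg V E = Max ((\<lambda>v. card (Einc E v)) ` V)"

record 'v mstate =
  inC   :: "'v set"
  trm   :: "'v set"            \<comment> \<open>terminated vertices (in C or with E'(v) empty)\<close>
  cov   :: "'v set set"
  Ep    :: "'v \<Rightarrow> 'v set set"
  deal  :: "'v set \<Rightarrow> real"
  dlt   :: "'v set \<Rightarrow> real"

definition init_state :: "'v set set \<Rightarrow> ('v \<Rightarrow> real) \<Rightarrow> real \<Rightarrow> 'v mstate" where
  "init_state E w \<beta> =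
     (let d = (\<lambda>e. \<beta> * Min ((\<lambda>v. w v / real (card (Einc E v))) ` e))
      in \<lparr> inC = {}, trm = {}, cov = {}, Ep = Einc E, deal = d, dlt = d \<rparr>)"

definition step :: "'v set \<Rightarrow> 'v set set \<Rightarrow> ('v \<Rightarrow> real) \<Rightarrow> real \<Rightarrow> real \<Rightarrow> 'v mstate \<Rightarrow> 'v mstate" where
  "step V E w \<beta> \<alpha> s =
     (let \<comment> \<open>(a) non-terminated vertices that join C\<close>
          J = {v \<in> V. v \<notin> trm s \<and> (\<Sum>e\<in>Einc E v. dlt s e) \<ge> (1 - \<beta>) * w v};
          \<comment> \<open>(b) hyperedges informed by a joining vertex become covered\<close>
          newcov = {e \<in> E - cov s. \<exists>v\<in>J. e \<in> Ep s v};
          cov' = cov s \<union> newcov;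
          \<comment> \<open>(c) remaining vertices drop covered edges, terminate if E'(v) empty\<close>
          Ep' = (\<lambda>v. if v \<notin> trm s \<and> v \<notin> J then Ep s v - newcov else Ep s v);
          trm' = trm s \<union> J \<union> {v \<in> V. v \<notin> trm s \<and> v \<notin> J \<and> Ep' v = {}};
          \<comment> \<open>(d) active vertices send stuck (or raise) to all e in E'(v)\<close>
          stuck = (\<lambda>v. v \<in> V \<and> v \<notin> trm' \<and> \<not> ((\<Sum>e\<in>Ep' v. deal s e) \<le> (\<beta> / \<alpha>) * w v));
          \<comment> \<open>(e) uncovered hyperedges update deal and delta\<close>
          deal' = (\<lambda>e. if e \<in> E \<and> e \<notin> cov' then
                          (if \<exists>v\<in>e. stuck v \<and> e \<in> Ep' v then deal s e else \<alpha> * deal s e)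
                        else deal s e);
          dlt' = (\<lambda>e. if e \<in> E \<and> e \<notin> cov' then dlt s e + deal' e else dlt s e)
      in \<lparr> inC = inC s \<union> J, trm = trm', cov = cov', Ep = Ep', deal = deal', dlt = dlt' \<rparr>)"

fun mwhvc :: "'v set \<Rightarrow> 'v set set \<Rightarrow> ('v \<Rightarrow> real) \<Rightarrow> real \<Rightarrow> real \<Rightarrow> nat \<Rightarrow> 'v mstate" where
  "mwhvc V E w \<beta> \<alpha> 0 = init_state E w \<beta>"
| "mwhvc V E w \<beta> \<alpha> (Suc i) = step V E w \<beta> \<alpha> (mwhvc V E w \<beta> \<alpha> i)"

text \<open>Iteration i \<ge> 1 is an e-raise iteration: e is still uncovered (so deal_i(e) is
  defined by step (e)) and deal_i(e) = alpha * deal_{i-1}(e).\<close>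
definition raise_iter :: "'v set \<Rightarrow> 'v set set \<Rightarrow> ('v \<Rightarrow> real) \<Rightarrow> real \<Rightarrow> real \<Rightarrow> 'v set \<Rightarrow> nat \<Rightarrow> bool" where
  "raise_iter V E w \<beta> \<alpha> e i \<longleftrightarrow>
     1 \<le> i \<and> e \<in> E \<and> e \<notin> cov (mwhvc V E w \<beta> \<alpha> i) \<and>
     deal (mwhvc V E w \<beta> \<alpha> i) e = \<alpha> * deal (mwhvc V E w \<beta> \<alpha> (i - 1)) e"

end

theory Submission imports Defs begin

lemma step_cov_mono: "cov s \<subseteq> cov (step V E w \<beta> \<alpha> s)"
  by (auto simp: step_def Let_def)

lemma step_deal_eq: "deal (step V E w \<beta> \<alpha> s) x = (if x \<in> E \<and> x \<notin> cov (step V E w \<beta> \<alpha> s) then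
   (if \<exists>v\<in>x. (v \<in> V \<and> v \<notin> trm (step V E w \<beta> \<alpha> s) \<and> \<not> ((\<Sum>y\<in>Ep (step V E w \<beta> \<alpha> s) v. deal s y) \<le> (\<beta> / \<alpha>) * w v)) \<and> x \<in> Ep (step V E w \<beta> \<alpha> s) v
    then deal s x else \<alpha> * deal s x) else deal s x)"
  by (simp only: step_def Let_def mstate.select_convs)

lemma step_deal_cases: "deal (step V E w \<beta> \<alpha> s) x = deal s x \<or> deal (step V E w \<beta> \<alpha> s) x = \<alpha> * deal s x"
  using step_deal_eq[of V E w \<beta> \<alpha> s x] by (auto split: if_splits)

lemma step_deal_cov: "x \<in> cov (step V E w \<beta> \<alpha> s) \<Longrightarrow> deal (step V E w \<beta> \<alpha> s) x = deal s x"
  by (subst step_deal_eq) simp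

lemma step_Ep_sub: "Ep (step V E w \<beta> \<alpha> s) v \<subseteq> Ep s v"
  by (auto simp: step_def Let_def)

lemma step_inv:
  assumes "e \<in> E" "e \<notin> cov (step V E w \<beta> \<alpha> s)" "\<forall>v\<in>e. v \<notin> trm s \<and> e \<in> Ep s v"
  shows "\<forall>v\<in>e. v \<notin> trm (step V E w \<beta> \<alpha> s) \<and> e \<in> Ep (step V E w \<beta> \<alpha> s) v"
  using assms by (auto simp: step_def Let_def split: if_splits)

lemma step_join:
  assumes "u \<in> V" "u \<notin> trm s" "(\<Sum>x\<in>Einc E u. dlt s x) \<ge> (1-\<beta>) * w u"
    "x \<in> E" "x \<notin> cov s" "x \<in> Ep s u"
  shows "x \<in> cov (step V E w \<beta> \<alpha> s)"
  using assms by (auto simp: step_def Let_def)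

lemma step_raise:
  assumes "e \<in> E" "e \<notin> cov (step V E w \<beta> \<alpha> s)"
    "deal (step V E w \<beta> \<alpha> s) e = \<alpha> * deal s e" "deal s e \<noteq> \<alpha> * deal s e"
    "u \<in> e" "u \<in> V" "u \<notin> trm (step V E w \<beta> \<alpha> s)" "e \<in> Ep (step V E w \<beta> \<alpha> s) u"
  shows "(\<Sum>x\<in>Ep (step V E w \<beta> \<alpha> s) u. deal s x) \<le> \<beta> / \<alpha> * w u"
proof -
  have "\<not> (\<exists>v\<in>e. (v \<in> V \<and> v \<notin> trm (step V E w \<beta> \<alpha> s) \<and> \<not> ((\<Sum>y\<in>Ep (step V E w \<beta> \<alpha> s) v. deal s y) \<le> (\<beta> / \<alpha>) * w v)) \<and> e \<in> Ep (step V E w \<beta> \<alpha> s) v)"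
    using assms(1-4) step_deal_eq[of V E w \<beta> \<alpha> s e] by (auto split: if_splits)
  then show ?thesis using assms(5-8) by auto
qed


theorem mainTheorem4:
  fixes V :: "'v set" and E :: "'v set set" and w :: "'v \<Rightarrow> real"
    and f :: nat and \<epsilon> \<alpha> :: real and e :: "'v set"
  assumes "finite V"
    and "\<forall>e\<in>E. e \<noteq> {} \<and> e \<subseteq> V \<and> card e \<le> f"
    and "\<forall>v\<in>V. 0 \<le> w v"
    and "0 < \<epsilon>" and "\<epsilon> \<le> 1"
    and "1 < \<alpha>"
    and "3 \<le> maxdeg V E"
    and "e \<in> E"
  shows "finite {i. raise_iter V E w (\<epsilon> / (real f + \<epsilon>)) \<alpha> e i} \<and>
         real (card {i. raise_iter V E w (\<epsilon> / (real f + \<epsilon>)) \<alpha> e i}) \<le> log \<alpha> (real (maxdeg V E))"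
proof -
  note finV = assms(1) and Ehyp = assms(2) and wnn = assms(3) and alpha1 = assms(6)
    and Del3 = assms(7) and eE = assms(8)
  define \<beta> where "\<beta> = \<epsilon> / (real f + \<epsilon>)"
  have beta0: "0 < \<beta>" using assms(4) unfolding \<beta>_def by simp
  define s where "s = mwhvc V E w \<beta> \<alpha>"
  have sSuc: "\<And>i. s (Suc i) = step V E w \<beta> \<alpha> (s i)" unfolding s_def by simp
  have s0: "s 0 = init_state E w \<beta>" unfolding s_def by simp
  define R where "R = {i. raise_iter V E w \<beta> \<alpha> e i}"
  define \<Delta> where "\<Delta> = maxdeg V E"
  have finE: "finite E"
    by (rule finite_subset[of E "Pow V"]) (use Ehyp finV in auto)
  have finx: "\<And>x. x \<in> E \<Longrightarrow> finite x" using Ehyp finV finite_subset by blast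
  have Rdef: "\<And>i. i \<in> R \<longleftrightarrow> 1 \<le> i \<and> e \<notin> cov (s i) \<and> deal (s i) e = \<alpha> * deal (s (i - 1)) e"
    unfolding R_def s_def raise_iter_def using eE by auto
  have deal0: "\<And>x. deal (s 0) x = \<beta> * Min ((\<lambda>v. w v / real (card (Einc E v))) ` x)"
    unfolding s0 init_state_def Let_def by simp
  have dlt0: "\<And>x. dlt (s 0) x = deal (s 0) x"
    unfolding s0 init_state_def Let_def by simp
  have nn0: "\<And>x. x \<in> E \<Longrightarrow> 0 \<le> deal (s 0) x"
  proof -
    fix x assume xE: "x \<in> E"
    have "0 \<le> Min ((\<lambda>v. w v / real (card (Einc E v))) ` x)"
    proof (subst Min_ge_iff)
      show "finite ((\<lambda>v. w v / real (card (Einc E v))) ` x)" using finx[OF xE] by simp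
      show "(\<lambda>v. w v / real (card (Einc E v))) ` x \<noteq> {}" using Ehyp xE by simp
      have "x \<subseteq> V" using Ehyp xE by simp
      then show "\<forall>a\<in>(\<lambda>v. w v / real (card (Einc E v))) ` x. 0 \<le> a" using wnn by auto
    qed
    then show "0 \<le> deal (s 0) x" using beta0 deal0 by simp
  qed
  have nn: "\<And>i x. x \<in> E \<Longrightarrow> 0 \<le> deal (s i) x"
  proof -
    fix i x assume xE: "x \<in> E"
    show "0 \<le> deal (s i) x"
    proof (induction i)
      case 0 then show ?case using nn0 xE by simp
    next
      case (Suc i)
      then show ?case using step_deal_cases[of V E w \<beta> \<alpha> "s i" x] alpha1 sSuc
        by (metis less_trans mult_nonneg_nonneg order_less_imp_le zero_less_one)
    qed
  qed
  have Epsub: "\<And>i v. Ep (s i) v \<subseteq> E"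
  proof -
    fix i v show "Ep (s i) v \<subseteq> E"
    proof (induction i)
      case 0 then show ?case unfolding s0 init_state_def Let_def Einc_def by auto
    next
      case (Suc i) then show ?case using step_Ep_sub sSuc by (metis order_trans)
    qed
  qed
  have covmono: "\<And>i j. i \<le> j \<Longrightarrow> cov (s i) \<subseteq> cov (s j)"
    by (rule lift_Suc_mono_le[of "\<lambda>i. cov (s i)"]) (auto simp: sSuc dest: step_cov_mono[THEN subsetD])
  have inv: "\<And>i. e \<notin> cov (s i) \<Longrightarrow> (\<forall>v\<in>e. v \<notin> trm (s i) \<and> e \<in> Ep (s i) v)"
  proof -
    fix i show "e \<notin> cov (s i) \<Longrightarrow> (\<forall>v\<in>e. v \<notin> trm (s i) \<and> e \<in> Ep (s i) v)"
    proof (induction i)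
      case 0 then show ?case unfolding s0 init_state_def Let_def Einc_def using eE by auto
    next
      case (Suc i)
      have "e \<notin> cov (s i)" using Suc.prems covmono[of i "Suc i"] by auto
      then show ?case using Suc step_inv[of e E V w \<beta> \<alpha> "s i"] eE sSuc by auto
    qed
  qed
  have eV: "e \<subseteq> V" and ene: "e \<noteq> {}" using Ehyp eE by auto
  have fine: "finite e" using finx eE by blast
  obtain u where ue: "u \<in> e" and umin: "Min ((\<lambda>v. w v / real (card (Einc E v))) ` e) = w u / real (card (Einc E u))"
  proof -
    have "Min ((\<lambda>v. w v / real (card (Einc E v))) ` e) \<in> (\<lambda>v. w v / real (card (Einc E v))) ` e"
      using fine ene by (intro Min_in) auto
    then show ?thesis using that by blast
  qed
  have uV: "u \<in> V" using ue eV by auto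
  have d0: "deal (s 0) e = \<beta> * (w u / real (card (Einc E u)))" using deal0 umin by simp
  have finEinc: "finite (Einc E u)" unfolding Einc_def using finE by simp
  have cpos: "1 \<le> card (Einc E u)"
  proof -
    have "e \<in> Einc E u" unfolding Einc_def using eE ue by simp
    then have "Einc E u \<noteq> {}" by auto
    then show ?thesis using finEinc by (simp add: Suc_le_eq card_gt_0_iff)
  qed
  have cle: "card (Einc E u) \<le> \<Delta>"
    unfolding \<Delta>_def maxdeg_def using finV uV by (intro Max_ge) auto
  have logpos: "0 \<le> log \<alpha> (real \<Delta>)" using alpha1 Del3 unfolding \<Delta>_def by simp
  have main: "finite R \<and> real (card R) \<le> log \<alpha> (real \<Delta>)"
  proof (cases "w u = 0")
    case True
    have "e \<in> cov (s 1)"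
    proof -
      have "0 \<le> (\<Sum>x\<in>Einc E u. dlt (s 0) x)"
        using nn0 dlt0 by (intro sum_nonneg) (auto simp: Einc_def)
      then have "(\<Sum>x\<in>Einc E u. dlt (s 0) x) \<ge> (1 - \<beta>) * w u" using True by simp
      moreover have "u \<notin> trm (s 0)" "e \<notin> cov (s 0)" "e \<in> Ep (s 0) u"
        unfolding s0 init_state_def Let_def Einc_def using eE ue by auto
      ultimately show ?thesis using step_join[OF uV] eE sSuc[of 0] by simp
    qed
    then have "R = {}" using Rdef covmono[of 1] by auto
    then show ?thesis using logpos by simp
  next
    case False
    then have wpos: "0 < w u" using wnn uV by (simp add: order_less_le)
    have d0pos: "0 < deal (s 0) e" using d0 wpos beta0 cpos by simp
    have D: "\<And>N. deal (s N) e = \<alpha> ^ card (R \<inter> {..N}) * deal (s 0) e"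
    proof -
      fix N show "deal (s N) e = \<alpha> ^ card (R \<inter> {..N}) * deal (s 0) e"
      proof (induction N)
        case 0
        have "R \<inter> {..0} = {}" using Rdef by auto
        then show ?case by simp
      next
        case (Suc N)
        show ?case
        proof (cases "Suc N \<in> R")
          case True
          have "R \<inter> {..Suc N} = insert (Suc N) (R \<inter> {..N})" using True by auto
          then have "card (R \<inter> {..Suc N}) = Suc (card (R \<inter> {..N}))" by simp
          moreover have "deal (s (Suc N)) e = \<alpha> * deal (s N) e" using True Rdef by simp
          ultimately show ?thesis using Suc.IH by simp
        next
          case False
          have "R \<inter> {..Suc N} = R \<inter> {..N}" using False by (auto simp: le_Suc_eq)
          moreover have "deal (s (Suc N)) e = deal (s N) e"
          proof (cases "e \<in> cov (s (Suc N))")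
            case True then show ?thesis using step_deal_cov sSuc by metis
          next
            case False2: False
            then have "deal (s (Suc N)) e \<noteq> \<alpha> * deal (s N) e" using False Rdef by simp
            then show ?thesis using step_deal_cases sSuc by metis
          qed
          ultimately show ?thesis using Suc.IH by simp
        qed
      qed
    qed
    have B: "\<And>N. \<alpha> ^ card (R \<inter> {..N}) \<le> real \<Delta>"
    proof -
      fix N show "\<alpha> ^ card (R \<inter> {..N}) \<le> real \<Delta>"
      proof (induction N)
        case 0
        have "R \<inter> {..0} = {}" using Rdef by auto
        then show ?case using Del3 unfolding \<Delta>_def by simp
      next
        case (Suc N)
        show ?case
        proof (cases "Suc N \<in> R")
          case True
          define k where "k = card (R \<inter> {..N})"
          have "R \<inter> {..Suc N} = insert (Suc N) (R \<inter> {..N})" using True by auto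
          then have ck: "card (R \<inter> {..Suc N}) = Suc k" unfolding k_def by simp
          have ncov: "e \<notin> cov (s (Suc N))" and raise: "deal (s (Suc N)) e = \<alpha> * deal (s N) e"
            using True Rdef by auto
          have dNpos: "0 < deal (s N) e" using D[of N] d0pos alpha1 by simp
          have neq: "deal (s N) e \<noteq> \<alpha> * deal (s N) e" using dNpos alpha1 by simp
          have iv: "u \<notin> trm (s (Suc N))" "e \<in> Ep (s (Suc N)) u" using inv[OF ncov] ue by auto
          have sumle: "(\<Sum>x\<in>Ep (s (Suc N)) u. deal (s N) x) \<le> \<beta> / \<alpha> * w u"
            using step_raise[of e E V w \<beta> \<alpha> "s N" u] eE ncov raise neq ue uV iv sSuc by simp
          have "deal (s N) e \<le> (\<Sum>x\<in>Ep (s (Suc N)) u. deal (s N) x)"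
            using iv(2) Epsub[of "Suc N" u] finE nn
            by (intro member_le_sum) (auto intro: finite_subset)
          with sumle have "\<alpha> ^ k * (\<beta> * (w u / real (card (Einc E u)))) \<le> \<beta> / \<alpha> * w u"
            using D[of N] d0 unfolding k_def by simp
          then have "\<alpha> ^ k * (\<beta> * w u) / real (card (Einc E u)) \<le> (\<beta> * w u) / \<alpha>" by simp
          then have "\<alpha> ^ k * (\<beta> * w u) * \<alpha> \<le> (\<beta> * w u) * real (card (Einc E u))"
            using cpos alpha1 by (simp add: field_simps)
          then have "\<alpha> ^ Suc k * (\<beta> * w u) \<le> real (card (Einc E u)) * (\<beta> * w u)"
            by (simp add: algebra_simps)
          then have "\<alpha> ^ Suc k \<le> real (card (Einc E u))"
            using beta0 wpos by (simp add: mult_le_cancel_right)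
          also have "\<dots> \<le> real \<Delta>" using cle by simp
          finally show ?thesis using ck by simp
        next
          case False
          have "R \<inter> {..Suc N} = R \<inter> {..N}" using False by (auto simp: le_Suc_eq)
          then show ?thesis using Suc.IH by simp
        qed
      qed
    qed
    have C: "\<And>F. finite F \<Longrightarrow> F \<subseteq> R \<Longrightarrow> real (card F) \<le> log \<alpha> (real \<Delta>)"
    proof -
      fix F :: "nat set" assume fF: "finite F" and FR: "F \<subseteq> R"
      show "real (card F) \<le> log \<alpha> (real \<Delta>)"
      proof (cases "F = {}")
        case True then show ?thesis using logpos by simp
      next
        case False
        have "F \<subseteq> R \<inter> {..Max F}" using FR fF by auto
        then have "card F \<le> card (R \<inter> {..Max F})" by (intro card_mono) auto
        then have "\<alpha> ^ card F \<le> \<alpha> ^ card (R \<inter> {..Max F})" using alpha1 by (intro power_increasing) auto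
        also have "\<dots> \<le> real \<Delta>" by (rule B)
        finally have "\<alpha> powr real (card F) \<le> real \<Delta>" using alpha1 by (simp add: powr_realpow)
        moreover have "0 < real \<Delta>" using Del3 unfolding \<Delta>_def by simp
        ultimately show ?thesis using alpha1 by (simp add: le_log_iff)
      qed
    qed
    have finR: "finite R"
    proof (rule ccontr)
      assume "\<not> finite R"
      then obtain F where "finite F" "card F = Suc (nat \<lceil>log \<alpha> (real \<Delta>)\<rceil>)" "F \<subseteq> R"
        using infinite_arbitrarily_large by blast
      then have "real (Suc (nat \<lceil>log \<alpha> (real \<Delta>)\<rceil>)) \<le> log \<alpha> (real \<Delta>)" using C by metis
      then show False by linarith
    qed
    then show ?thesis using C by blast
  qed
  then show ?thesis unfolding R_def \<beta>_def \<Delta>_def .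
qed

end
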